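(* Let $f,g\in\mathbb{R}[x_1,\dots,x_n]$ be forms, where $f$ is nonconstant with strictly positive coefficients and $g(x)>0$ for all $x\in\mathbb{R}_+^n\setminus\{0\}$. Then there exists an integer $l\ge1$ such that all coefficients of $f^lg$ are nonnegative.
   Context: A form is a homogeneous polynomial. A form $f=\sum_{|w|=d}a_wx^w$ of degree $d$ has strictly positive coefficients if $a_w>0$ for every $w\in\mathbb{Z}_{\ge0}^n$ with $|w|=d$. $\mathbb{R}_+^n=\{x\in\mathbb{R}^n: x_i\ge0\ \forall i\}$. *)

theory Defs
  imports Complex_Main "HOL-Library.Poly_Mapping"
begin

text \<open>Polynomials in the variables x_0,...,x_(n-1) with real coefficients are represented
  as finitely supported maps from exponent vectors to coefficients.\<close>

type_synonym rpoly = "(nat \<Rightarrow>\<^sub>0 nat) \<Rightarrow>\<^sub>0 real"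

definition monomials :: "nat \<Rightarrow> nat \<Rightarrow> (nat \<Rightarrow>\<^sub>0 nat) set" where
  "monomials n d = {w. Poly_Mapping.keys w \<subseteq> {..<n} \<and> (\<Sum>i<n. Poly_Mapping.lookup w i) = d}"

definition is_form :: "nat \<Rightarrow> nat \<Rightarrow> rpoly \<Rightarrow> bool" where
  "is_form n d p \<longleftrightarrow> Poly_Mapping.keys p \<subseteq> monomials n d"

definition strictly_pos_coeffs :: "nat \<Rightarrow> nat \<Rightarrow> rpoly \<Rightarrow> bool" where
  "strictly_pos_coeffs n d p \<longleftrightarrow> (\<forall>w\<in>monomials n d. Poly_Mapping.lookup p w > 0)"

definition nonconstant :: "rpoly \<Rightarrow> bool" where
  "nonconstant p \<longleftrightarrow> (\<exists>w\<in>Poly_Mapping.keys p. w \<noteq> 0)"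

definition peval :: "nat \<Rightarrow> rpoly \<Rightarrow> (nat \<Rightarrow> real) \<Rightarrow> real" where
  "peval n p x = (\<Sum>w\<in>Poly_Mapping.keys p. Poly_Mapping.lookup p w * (\<Prod>i<n. x i ^ Poly_Mapping.lookup w i))"

end

theory Submission
  imports Defs "HOL-Analysis.Analysis"
begin


lemma lookup_mult_keys:
  fixes p q :: "('a::comm_monoid_add) \<Rightarrow>\<^sub>0 real"
  shows "Poly_Mapping.lookup (p * q) w =
    (\<Sum>u\<in>Poly_Mapping.keys p. \<Sum>v\<in>Poly_Mapping.keys q. (Poly_Mapping.lookup p u * Poly_Mapping.lookup q v when w = u + v))"
proof -
  have inner: "(\<Sum>v. Poly_Mapping.lookup q v when w = u + v) =
     (\<Sum>v\<in>Poly_Mapping.keys q. Poly_Mapping.lookup q v when w = u + v)" for u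
    by (rule Sum_any.expand_superset) (auto simp: in_keys_iff)
  have "Poly_Mapping.lookup (p * q) w = (\<Sum>u. Poly_Mapping.lookup p u * (\<Sum>v\<in>Poly_Mapping.keys q. Poly_Mapping.lookup q v when w = u + v))"
    by (simp add: lookup_mult inner)
  also have "\<dots> = (\<Sum>u\<in>Poly_Mapping.keys p. Poly_Mapping.lookup p u * (\<Sum>v\<in>Poly_Mapping.keys q. Poly_Mapping.lookup q v when w = u + v))"
    by (rule Sum_any.expand_superset) (auto simp: in_keys_iff)
  also have "\<dots> = (\<Sum>u\<in>Poly_Mapping.keys p. \<Sum>v\<in>Poly_Mapping.keys q. (Poly_Mapping.lookup p u * Poly_Mapping.lookup q v when w = u + v))"
    by (simp add: sum_distrib_left mult_when)
  finally show ?thesis .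
qed

definition pge0 :: "rpoly \<Rightarrow> bool" where
  "pge0 p \<longleftrightarrow> (\<forall>w. Poly_Mapping.lookup p w \<ge> 0)"

lemma pge0_mult: "pge0 p \<Longrightarrow> pge0 q \<Longrightarrow> pge0 (p * q)"
  unfolding pge0_def lookup_mult_keys
  by (auto intro!: sum_nonneg simp: when_def)

lemma pge0_add: "pge0 p \<Longrightarrow> pge0 q \<Longrightarrow> pge0 (p + q)"
  unfolding pge0_def by (simp add: lookup_add)

lemma pge0_one: "pge0 1"
  unfolding pge0_def by (simp add: lookup_one when_def)

lemma pge0_power: "pge0 p \<Longrightarrow> pge0 (p ^ k)"
  by (induction k) (auto simp: pge0_one pge0_mult)

lemma pge0_sum: "(\<And>i. i \<in> A \<Longrightarrow> pge0 (f i)) \<Longrightarrow> pge0 (sum f A)"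
  unfolding pge0_def by (auto simp: lookup_sum intro!: sum_nonneg)

lemma lookup_mult_ge:
  assumes "pge0 p" "pge0 q" "w = u + v"
  shows "Poly_Mapping.lookup (p * q) w \<ge> Poly_Mapping.lookup p u * Poly_Mapping.lookup q v"
proof (cases "u \<in> Poly_Mapping.keys p \<and> v \<in> Poly_Mapping.keys q")
  case True
  have nn: "\<And>u v. 0 \<le> (Poly_Mapping.lookup p u * Poly_Mapping.lookup q v when w = u + v)"
    using assms(1,2) unfolding pge0_def by (auto simp: when_def)
  have "Poly_Mapping.lookup p u * Poly_Mapping.lookup q v =
     (Poly_Mapping.lookup p u * Poly_Mapping.lookup q v when w = u + v)" using assms(3) by simp
  also have "\<dots> \<le> (\<Sum>v\<in>Poly_Mapping.keys q. (Poly_Mapping.lookup p u * Poly_Mapping.lookup q v when w = u + v))"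
    using True by (intro member_le_sum nn) auto
  also have "\<dots> \<le> (\<Sum>u\<in>Poly_Mapping.keys p. \<Sum>v\<in>Poly_Mapping.keys q. (Poly_Mapping.lookup p u * Poly_Mapping.lookup q v when w = u + v))"
    using True by (intro member_le_sum[where f="\<lambda>u. \<Sum>v\<in>Poly_Mapping.keys q. (Poly_Mapping.lookup p u * Poly_Mapping.lookup q v when w = u + v)"] sum_nonneg nn) auto
  finally show ?thesis by (simp add: lookup_mult_keys)
next
  case False
  then have "Poly_Mapping.lookup p u * Poly_Mapping.lookup q v = 0" by (auto simp: in_keys_iff)
  then show ?thesis using pge0_mult[OF assms(1,2)] unfolding pge0_def by metis
qed

definition cst :: "real \<Rightarrow> rpoly" where "cst c = Poly_Mapping.single 0 c"

lemma lookup_cst_mult [simp]: "Poly_Mapping.lookup (cst c * p) w = c * Poly_Mapping.lookup p w"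
proof (cases "c = 0")
  case True then show ?thesis by (simp add: cst_def)
next
  case False
  then have "Poly_Mapping.keys (cst c) = {0}" by (simp add: cst_def)
  then show ?thesis
    by (auto simp: lookup_mult_keys cst_def when_def in_keys_iff)
qed

lemma cst_mult: "cst a * cst b = cst (a * b)"
  by (simp add: cst_def mult_single)

lemma cst_power: "cst a ^ k = cst (a ^ k)"
  by (induction k) (auto simp: cst_def mult_single)

lemma cst_of_nat: "(of_nat m :: rpoly) = cst (of_nat m)"
  by (simp add: cst_def)

lemma pge0_cst_mult: "c \<ge> 0 \<Longrightarrow> pge0 p \<Longrightarrow> pge0 (cst c * p)"
  unfolding pge0_def by simp

definition ple :: "rpoly \<Rightarrow> rpoly \<Rightarrow> bool" where
  "ple p q \<longleftrightarrow> (\<forall>w. Poly_Mapping.lookup p w \<le> Poly_Mapping.lookup q w)"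

lemma ple_iff: "ple p q \<longleftrightarrow> pge0 (q - p)"
  unfolding ple_def pge0_def by (simp add: lookup_minus)

lemma ple_mult_left: "pge0 r \<Longrightarrow> ple p q \<Longrightarrow> ple (r * p) (r * q)"
  unfolding ple_iff by (metis pge0_mult right_diff_distrib)

lemma ple_trans: "ple p q \<Longrightarrow> ple q r \<Longrightarrow> ple p r"
  unfolding ple_def by (meson order_trans)

lemma ple_mult_both:
  assumes "pge0 p" "pge0 q" "ple p p'" "ple q q'"
  shows "ple (p * q) (p' * q')"
proof -
  have "pge0 p'" using assms(1,3) unfolding ple_def pge0_def by (meson order_trans)
  have "ple (p * q) (p * q')" by (rule ple_mult_left[OF assms(1,4)])
  moreover have "ple (q' * p) (q' * p')"
    using assms(2,4) by (intro ple_mult_left[OF _ assms(3)]) (unfold ple_def pge0_def, meson order_trans)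
  ultimately show ?thesis by (metis ple_trans mult.commute)
qed

lemma ple_power:
  assumes "pge0 p" "ple p q"
  shows "ple (p ^ k) (q ^ k)"
proof (induction k)
  case 0 then show ?case by (simp add: ple_def)
next
  case (Suc k)
  then show ?case by (simp only: power_Suc) (rule ple_mult_both[OF assms(1) pge0_power[OF assms(1)] assms(2)])
qed




definition vle :: "(nat \<Rightarrow>\<^sub>0 nat) \<Rightarrow> (nat \<Rightarrow>\<^sub>0 nat) \<Rightarrow> bool" where
  "vle v w \<longleftrightarrow> (\<forall>i. Poly_Mapping.lookup v i \<le> Poly_Mapping.lookup w i)"

lemma add_eq_iff_vle: "(w = u + v) \<longleftrightarrow> (vle v w \<and> u = w - v)"
  for u v w :: "nat \<Rightarrow>\<^sub>0 nat"
proof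
  assume "w = u + v"
  then show "vle v w \<and> u = w - v"
    by (auto simp: vle_def lookup_add lookup_minus intro!: poly_mapping_eqI)
next
  assume "vle v w \<and> u = w - v"
  then show "w = u + v"
    by (auto simp: vle_def lookup_add lookup_minus intro!: poly_mapping_eqI)
qed

lemma lookup_mult_right:
  fixes p q :: rpoly
  shows "Poly_Mapping.lookup (p * q) w =
    (\<Sum>v\<in>Poly_Mapping.keys q. (Poly_Mapping.lookup p (w - v) * Poly_Mapping.lookup q v when vle v w))"
proof -
  have "Poly_Mapping.lookup (p * q) w =
    (\<Sum>v\<in>Poly_Mapping.keys q. \<Sum>u\<in>Poly_Mapping.keys p. (Poly_Mapping.lookup p u * Poly_Mapping.lookup q v when w = u + v))"
    by (simp add: lookup_mult_keys sum.swap[of _ "Poly_Mapping.keys p"])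
  also have "\<dots> = (\<Sum>v\<in>Poly_Mapping.keys q. (Poly_Mapping.lookup p (w - v) * Poly_Mapping.lookup q v when vle v w))"
  proof (rule sum.cong[OF refl])
    fix v
    have "(\<Sum>u\<in>Poly_Mapping.keys p. (Poly_Mapping.lookup p u * Poly_Mapping.lookup q v when w = u + v))
       = (\<Sum>u\<in>Poly_Mapping.keys p. if u = w - v then (Poly_Mapping.lookup p u * Poly_Mapping.lookup q v when vle v w) else 0)"
      by (rule sum.cong[OF refl]) (auto simp: add_eq_iff_vle when_def)
    also have "\<dots> = (Poly_Mapping.lookup p (w - v) * Poly_Mapping.lookup q v when vle v w)"
      by (subst sum.delta) (auto simp: in_keys_iff when_def)
    finally show "(\<Sum>u\<in>Poly_Mapping.keys p. (Poly_Mapping.lookup p u * Poly_Mapping.lookup q v when w = u + v))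
       = (Poly_Mapping.lookup p (w - v) * Poly_Mapping.lookup q v when vle v w)" .
  qed
  finally show ?thesis .
qed

lemma monomials_add:
  "u \<in> monomials n a \<Longrightarrow> v \<in> monomials n b \<Longrightarrow> u + v \<in> monomials n (a + b)"
  unfolding monomials_def
  using keys_add[of u v] by (auto simp: lookup_add sum.distrib)

lemma is_form_mult:
  "is_form n a p \<Longrightarrow> is_form n b q \<Longrightarrow> is_form n (a + b) (p * q)"
  unfolding is_form_def using keys_mult[of p q] monomials_add by blast

lemma zero_in_monomials: "0 \<in> monomials n 0"
  unfolding monomials_def by simp

lemma is_form_one: "is_form n 0 1"
  unfolding is_form_def using zero_in_monomials by simp

lemma is_form_power: "is_form n a p \<Longrightarrow> is_form n (a * k) (p ^ k)"
proof (induction k)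
  case 0 then show ?case by (simp add: is_form_one)
next
  case (Suc k)
  then show ?case using is_form_mult[of n a p "a * k" "p ^ k"] by (simp add: add.commute)
qed

lemma is_form_add: "is_form n a p \<Longrightarrow> is_form n a q \<Longrightarrow> is_form n a (p + q)"
  unfolding is_form_def using keys_add[of p q] by blast

lemma is_form_cst_mult: "is_form n a p \<Longrightarrow> is_form n a (cst c * p)"
  unfolding is_form_def by (auto simp: in_keys_iff)

lemma is_form_diff: "is_form n a p \<Longrightarrow> is_form n a q \<Longrightarrow> is_form n a (p - q)"
  unfolding is_form_def by (auto simp: in_keys_iff lookup_minus) (metis in_keys_iff subsetD)

lemma is_form_sum: "(\<And>i. i \<in> A \<Longrightarrow> is_form n a (f i)) \<Longrightarrow> is_form n a (sum f A)"
  unfolding is_form_def using keys_sum[of f A] by blast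

lemma is_form_lookup: "is_form n a p \<Longrightarrow> w \<notin> monomials n a \<Longrightarrow> Poly_Mapping.lookup p w = 0"
  unfolding is_form_def by (auto simp: in_keys_iff)

definition ev :: "nat \<Rightarrow> nat \<Rightarrow>\<^sub>0 nat" where "ev i = Poly_Mapping.single i 1"
definition X :: "nat \<Rightarrow> rpoly" where "X i = Poly_Mapping.single (ev i) 1"
definition S :: "nat \<Rightarrow> rpoly" where "S n = (\<Sum>i<n. X i)"

lemma lookup_ev: "Poly_Mapping.lookup (ev i) j = (if i = j then 1 else 0)"
  by (simp add: ev_def lookup_single when_def)

lemma ev_monomial: "i < n \<Longrightarrow> ev i \<in> monomials n 1"
  unfolding monomials_def by (auto simp: ev_def lookup_single when_def)

lemma is_form_X: "i < n \<Longrightarrow> is_form n 1 (X i)"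
  unfolding is_form_def X_def using ev_monomial by simp

lemma is_form_S: "is_form n 1 (S n)"
  unfolding S_def by (rule is_form_sum) (use is_form_X in auto)

lemma is_form_Spow: "is_form n k (S n ^ k)"
  using is_form_power[OF is_form_S, of n k] by simp

lemma pge0_X: "pge0 (X i)"
  unfolding pge0_def X_def by (simp add: lookup_single when_def)

lemma pge0_S: "pge0 (S n)"
  unfolding S_def by (rule pge0_sum) (simp add: pge0_X)

lemma lookup_mult_X:
  "Poly_Mapping.lookup (X i * p) w =
     (if Poly_Mapping.lookup w i \<ge> 1 then Poly_Mapping.lookup p (w - ev i) else 0)"
proof -
  have "Poly_Mapping.lookup (X i * p) w = Poly_Mapping.lookup (p * X i) w" by (simp add: mult.commute)
  also have "\<dots> = (Poly_Mapping.lookup p (w - ev i) when vle (ev i) w)"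
    by (simp add: lookup_mult_right X_def)
  also have "vle (ev i) w \<longleftrightarrow> Poly_Mapping.lookup w i \<ge> 1"
    by (auto simp: vle_def lookup_ev)
  finally show ?thesis by (simp add: when_def)
qed

lemma monomials_0: "w \<in> monomials n 0 \<Longrightarrow> w = 0"
  unfolding monomials_def
  by (auto intro!: poly_mapping_eqI simp: in_keys_iff)




lemma keys_minus_nat: "Poly_Mapping.keys (w - v) \<subseteq> Poly_Mapping.keys w"
  for w v :: "nat \<Rightarrow>\<^sub>0 nat"
  by (auto simp: in_keys_iff lookup_minus)

lemma monomials_minus_ev:
  assumes "w \<in> monomials n (Suc N)" "i < n" "Poly_Mapping.lookup w i \<ge> 1"
  shows "w - ev i \<in> monomials n N"
proof -
  have eq: "w = (w - ev i) + ev i"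
    using assms(3) by (auto intro!: poly_mapping_eqI simp: lookup_add lookup_minus lookup_ev)
  have k: "Poly_Mapping.keys (w - ev i) \<subseteq> {..<n}"
    using assms(1) keys_minus_nat[of w "ev i"] by (auto simp: monomials_def)
  have "(\<Sum>j<n. Poly_Mapping.lookup w j) = (\<Sum>j<n. Poly_Mapping.lookup (w - ev i) j) + (\<Sum>j<n. Poly_Mapping.lookup (ev i) j)"
    by (subst eq) (simp add: lookup_add sum.distrib)
  moreover have "(\<Sum>j<n. Poly_Mapping.lookup (ev i) j) = 1"
    using assms(2) by (simp add: lookup_ev)
  ultimately show ?thesis using assms(1) k by (simp add: monomials_def)
qed

lemma prod_fact_minus_ev:
  assumes "i < n" "Poly_Mapping.lookup w i \<ge> 1"
  shows "(\<Prod>j<n. (fact (Poly_Mapping.lookup (w - ev i) j) :: real)) * Poly_Mapping.lookup w i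
       = (\<Prod>j<n. fact (Poly_Mapping.lookup w j))"
proof -
  have A: "(\<Prod>j<n. (fact (Poly_Mapping.lookup (w - ev i) j) :: real)) =
     fact (Poly_Mapping.lookup w i - 1) * (\<Prod>j\<in>{..<n}-{i}. fact (Poly_Mapping.lookup w j))"
    using assms(1) by (subst prod.remove[of _ i]) (auto simp: lookup_minus lookup_ev intro!: prod.cong)
  have B: "(\<Prod>j<n. (fact (Poly_Mapping.lookup w j) :: real)) =
     fact (Poly_Mapping.lookup w i) * (\<Prod>j\<in>{..<n}-{i}. fact (Poly_Mapping.lookup w j))"
    using assms(1) by (subst prod.remove[of _ i]) auto
  have C: "(fact (Poly_Mapping.lookup w i) :: real) = fact (Poly_Mapping.lookup w i - 1) * Poly_Mapping.lookup w i"
    using assms(2) fact_reduce[of "Poly_Mapping.lookup w i"] by (simp add: mult.commute)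
  show ?thesis unfolding A B C by (simp add: ac_simps)
qed

lemma prod_fact_pos: "(\<Prod>j<n. (fact (Poly_Mapping.lookup w j) :: real)) > 0"
  by (rule prod_pos) auto

lemma lookup_S_power:
  "w \<in> monomials n N \<Longrightarrow> Poly_Mapping.lookup (S n ^ N) w = fact N / (\<Prod>j<n. fact (Poly_Mapping.lookup w j))"
proof (induction N arbitrary: w)
  case 0
  then have "w = 0" by (rule monomials_0)
  then show ?case by simp
next
  case (Suc N)
  let ?P = "(\<Prod>j<n. (fact (Poly_Mapping.lookup w j) :: real))"
  have P0: "?P > 0" by (rule prod_fact_pos)
  have trm: "Poly_Mapping.lookup (X i * S n ^ N) w = fact N * Poly_Mapping.lookup w i / ?P" if "i < n" for i
  proof (cases "Poly_Mapping.lookup w i \<ge> 1")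
    case True
    have "Poly_Mapping.lookup (X i * S n ^ N) w = fact N / (\<Prod>j<n. fact (Poly_Mapping.lookup (w - ev i) j))"
      using True Suc.IH[OF monomials_minus_ev[OF Suc.prems that True]] by (simp add: lookup_mult_X)
    also have "\<dots> = fact N * Poly_Mapping.lookup w i / ?P"
      using prod_fact_minus_ev[OF that True, symmetric] True
      by (simp add: field_simps)
    finally show ?thesis .
  next
    case False
    then show ?thesis by (simp add: lookup_mult_X)
  qed
  have sumw: "(\<Sum>i<n. Poly_Mapping.lookup w i) = Suc N" using Suc.prems by (simp add: monomials_def)
  have "Poly_Mapping.lookup (S n ^ Suc N) w = (\<Sum>i<n. Poly_Mapping.lookup (X i * S n ^ N) w)"
    by (simp add: S_def sum_distrib_right lookup_sum)
  also have "\<dots> = (\<Sum>i<n. fact N * Poly_Mapping.lookup w i / ?P)"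
    by (rule sum.cong) (simp_all add: trm)
  also have "\<dots> = fact N * real (\<Sum>i<n. Poly_Mapping.lookup w i) / ?P"
    by (simp add: sum_divide_distrib[symmetric] sum_distrib_left)
  also have "\<dots> = fact (Suc N) / ?P" using sumw by (simp add: algebra_simps)
  finally show ?case .
qed

lemma lookup_S_power_pos: "w \<in> monomials n N \<Longrightarrow> Poly_Mapping.lookup (S n ^ N) w > 0"
  using lookup_S_power prod_fact_pos by (simp add: lookup_S_power prod_fact_pos)

definition ff :: "nat \<Rightarrow> nat \<Rightarrow> real" where "ff a b = (\<Prod>j<b. (real a - real j))"

lemma fact_ff: "b \<le> a \<Longrightarrow> (fact a :: real) = ff a b * fact (a - b)"
proof (induction b)
  case 0 then show ?case by (simp add: ff_def)
next
  case (Suc b)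
  have e1: "real (a - b) = real a - real b" using Suc by (simp add: of_nat_diff)
  have e2: "(fact (a - b) :: real) = real (a - b) * fact (a - b - 1)"
    by (rule fact_reduce) (use Suc.prems in simp)
  have e3: "a - b - 1 = a - Suc b" by simp
  have "(fact a :: real) = ff a b * fact (a - b)" using Suc by simp
  also have "\<dots> = ff a b * (real a - real b) * fact (a - Suc b)" unfolding e2 e1 e3 by simp
  also have "\<dots> = ff a (Suc b) * fact (a - Suc b)" by (simp add: ff_def)
  finally show ?case .
qed

lemma ff_zero: "a < b \<Longrightarrow> ff a b = 0"
  unfolding ff_def by (rule prod_zero) auto

lemma lookup_Spow_mult:
  assumes g: "is_form n e g" and w: "w \<in> monomials n (N + e)"
  shows "Poly_Mapping.lookup (S n ^ N * g) w =
    fact N / (\<Prod>i<n. fact (Poly_Mapping.lookup w i)) *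
    (\<Sum>b\<in>Poly_Mapping.keys g. Poly_Mapping.lookup g b * (\<Prod>i<n. ff (Poly_Mapping.lookup w i) (Poly_Mapping.lookup b i)))"
proof -
  let ?P = "(\<Prod>i<n. (fact (Poly_Mapping.lookup w i) :: real))"
  have "Poly_Mapping.lookup (S n ^ N * g) w =
     (\<Sum>b\<in>Poly_Mapping.keys g. (Poly_Mapping.lookup (S n ^ N) (w - b) * Poly_Mapping.lookup g b when vle b w))"
    by (rule lookup_mult_right)
  also have "\<dots> = (\<Sum>b\<in>Poly_Mapping.keys g. fact N / ?P * (Poly_Mapping.lookup g b * (\<Prod>i<n. ff (Poly_Mapping.lookup w i) (Poly_Mapping.lookup b i))))"
  proof (rule sum.cong[OF refl])
    fix b assume bk: "b \<in> Poly_Mapping.keys g"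
    then have bm: "b \<in> monomials n e" using g by (auto simp: is_form_def)
    show "(Poly_Mapping.lookup (S n ^ N) (w - b) * Poly_Mapping.lookup g b when vle b w) =
       fact N / ?P * (Poly_Mapping.lookup g b * (\<Prod>i<n. ff (Poly_Mapping.lookup w i) (Poly_Mapping.lookup b i)))"
    proof (cases "vle b w")
      case True
      have wb: "w = (w - b) + b" using True by (simp add: add_eq_iff_vle)
      have "w - b \<in> monomials n N"
      proof -
        have k: "Poly_Mapping.keys (w - b) \<subseteq> {..<n}"
          using w keys_minus_nat[of w b] by (auto simp: monomials_def)
        have "(\<Sum>j<n. Poly_Mapping.lookup w j) = (\<Sum>j<n. Poly_Mapping.lookup (w - b) j) + (\<Sum>j<n. Poly_Mapping.lookup b j)"
          by (subst wb) (simp add: lookup_add sum.distrib)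
        then show ?thesis using w bm k by (simp add: monomials_def)
      qed
      then have L: "Poly_Mapping.lookup (S n ^ N) (w - b) = fact N / (\<Prod>i<n. fact (Poly_Mapping.lookup (w - b) i))"
        by (rule lookup_S_power)
      have F: "?P = (\<Prod>i<n. ff (Poly_Mapping.lookup w i) (Poly_Mapping.lookup b i)) * (\<Prod>i<n. fact (Poly_Mapping.lookup (w - b) i))"
        using True unfolding prod.distrib[symmetric]
        by (intro prod.cong) (auto simp: vle_def lookup_minus intro: fact_ff)
      define A where "A = (\<Prod>i<n. (fact (Poly_Mapping.lookup (w - b) i) :: real))"
      define B where "B = (\<Prod>i<n. ff (Poly_Mapping.lookup w i) (Poly_Mapping.lookup b i))"
      have A0: "A > 0" unfolding A_def by (rule prod_fact_pos)
      have "A * B > 0" using F prod_fact_pos[where n=n and w=w] unfolding A_def B_def by (simp add: mult.commute)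
      then have B0: "B \<noteq> 0" by auto
      have L': "Poly_Mapping.lookup (S n ^ N) (w - b) = fact N / A" using L A_def by simp
      have F': "?P = A * B" using F A_def B_def by simp
      show ?thesis using True A0 B0 unfolding L' F' B_def[symmetric] by (simp add: field_simps)
    next
      case False
      then obtain i where i: "Poly_Mapping.lookup w i < Poly_Mapping.lookup b i" by (auto simp: vle_def not_le)
      then have "i \<in> Poly_Mapping.keys b" by (simp add: in_keys_iff)
      then have "i < n" using bm by (auto simp: monomials_def)
      then have "(\<Prod>i<n. ff (Poly_Mapping.lookup w i) (Poly_Mapping.lookup b i)) = 0"
        using i by (intro prod_zero) (auto intro!: bexI[of _ i] ff_zero)
      then show ?thesis using False by simp
    qed
  qed
  also have "\<dots> = fact N / ?P * (\<Sum>b\<in>Poly_Mapping.keys g. Poly_Mapping.lookup g b * (\<Prod>i<n. ff (Poly_Mapping.lookup w i) (Poly_Mapping.lookup b i)))"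
    by (simp add: sum_distrib_left)
  finally show ?thesis .
qed




lemma peval_cong: "(\<And>i. i < n \<Longrightarrow> x i = y i) \<Longrightarrow> peval n g x = peval n g y"
  unfolding peval_def by (intro sum.cong refl arg_cong2[where f="(*)"] prod.cong) auto

lemma peval_min:
  assumes n: "0 < n"
    and g_pos: "\<And>x. (\<forall>i<n. x i \<ge> 0) \<Longrightarrow> (\<exists>i<n. x i \<noteq> 0) \<Longrightarrow> peval n g x > 0"
  shows "\<exists>m>0. \<forall>x. (\<forall>i<n. x i \<ge> 0) \<longrightarrow> (\<Sum>i<n. x i) = 1 \<longrightarrow> peval n g x \<ge> m"
proof -
  define T where "T = product_topology (\<lambda>_. euclideanreal) {..<n}"
  define BB where "BB = PiE {..<n} (\<lambda>_. {0..(1::real)})"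
  define K where "K = {x \<in> topspace T. (\<Sum>i<n. x i) \<in> {1}} \<inter> BB"
  have cB: "compactin T BB" unfolding T_def BB_def by (simp add: compactin_PiE)
  have cs: "continuous_map T euclideanreal (\<lambda>x. \<Sum>i<n. x i)"
    unfolding T_def by (intro continuous_map_sum) (auto intro: continuous_map_product_projection)
  have clK: "closedin T {x \<in> topspace T. (\<Sum>i<n. x i) \<in> {1}}"
    by (rule closedin_continuous_map_preimage[OF cs]) simp
  have cK: "compactin T K" unfolding K_def by (rule closed_Int_compactin[OF clK cB])
  have cp: "continuous_map T euclideanreal (peval n g)"
    unfolding T_def peval_def
    by (intro continuous_map_sum continuous_map_real_mult continuous_map_prod continuous_map_real_pow)
       (auto intro: continuous_map_product_projection)
  have cimg: "compact (peval n g ` K)"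
    using image_compactin[OF cK cp] by simp
  define x0 :: "nat \<Rightarrow> real" where "x0 = (\<lambda>i. if i < n then 1 / real n else undefined)"
  have x0B: "x0 \<in> BB" unfolding BB_def x0_def using n
    by (intro PiE_I) (auto simp: divide_simps)
  have x0T: "x0 \<in> topspace T" unfolding T_def x0_def by (simp add: PiE_def extensional_def)
  have "(\<Sum>i<n. x0 i) = 1" unfolding x0_def using n by simp
  then have "x0 \<in> K" unfolding K_def using x0B x0T by simp
  then have ne: "peval n g ` K \<noteq> {}" by auto
  obtain y where y: "y \<in> peval n g ` K" and ymin: "\<And>z. z \<in> peval n g ` K \<Longrightarrow> y \<le> z"
    using compact_attains_inf[OF cimg ne] by auto
  obtain xk where xk: "xk \<in> K" "y = peval n g xk" using y by auto
  have "y > 0"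
  proof -
    have xB: "xk \<in> BB" using xk(1) unfolding K_def by blast
    have nn: "\<forall>i<n. xk i \<ge> 0"
    proof (intro allI impI)
      fix i assume "i < n"
      then have "xk i \<in> {0..1}" using PiE_mem[OF xB[unfolded BB_def]] by blast
      then show "xk i \<ge> 0" by simp
    qed
    have s1: "(\<Sum>i<n. xk i) = 1" using xk(1) unfolding K_def by blast
    have "\<exists>i<n. xk i \<noteq> 0"
    proof (rule ccontr)
      assume "\<not> ?thesis"
      then have "(\<Sum>i<n. xk i) = 0" by simp
      with s1 show False by simp
    qed
    then show ?thesis using g_pos[OF nn] xk(2) by simp
  qed
  moreover have "peval n g x \<ge> y" if "\<forall>i<n. x i \<ge> 0" "(\<Sum>i<n. x i) = 1" for x
  proof -
    define x' where "x' = restrict x {..<n}"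
    have le1: "x i \<le> 1" if "i < n" for i
    proof -
      have "x i \<le> (\<Sum>j<n. x j)"
        using \<open>\<forall>i<n. x i \<ge> 0\<close> that by (intro member_le_sum) auto
      then show ?thesis using \<open>(\<Sum>i<n. x i) = 1\<close> by simp
    qed
    have x'B: "x' \<in> BB" unfolding BB_def x'_def using that le1
      by (intro PiE_I) auto
    have x'T: "x' \<in> topspace T" unfolding T_def x'_def by simp
    have "(\<Sum>i<n. x' i) = 1" unfolding x'_def using that by simp
    then have "x' \<in> K" unfolding K_def using x'B x'T by blast
    moreover have "peval n g x' = peval n g x" by (rule peval_cong) (simp add: x'_def)
    ultimately show ?thesis using ymin[of "peval n g x'"] by (metis imageI)
  qed
  ultimately show ?thesis by blast
qed




lemma prod_abs_le1:
  fixes y :: "'a \<Rightarrow> real"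
  assumes "\<And>k. k \<in> K \<Longrightarrow> \<bar>y k\<bar> \<le> 1"
  shows "\<bar>prod y K\<bar> \<le> 1"
  unfolding abs_prod by (rule prod_le_1) (use assms in auto)

lemma prod_diff_le:
  fixes y z :: "'a \<Rightarrow> real"
  assumes "finite K" "\<And>k. k \<in> K \<Longrightarrow> \<bar>y k\<bar> \<le> 1" "\<And>k. k \<in> K \<Longrightarrow> \<bar>z k\<bar> \<le> 1"
  shows "\<bar>prod y K - prod z K\<bar> \<le> (\<Sum>k\<in>K. \<bar>y k - z k\<bar>)"
  using assms
proof (induction K rule: finite_induct)
  case empty then show ?case by simp
next
  case (insert a K)
  have IH: "\<bar>prod y K - prod z K\<bar> \<le> (\<Sum>k\<in>K. \<bar>y k - z k\<bar>)" using insert by auto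
  have ya: "\<bar>y a\<bar> \<le> 1" using insert by auto
  have pz: "\<bar>prod z K\<bar> \<le> 1" using insert by (intro prod_abs_le1) auto
  have "y a * prod y K - z a * prod z K = y a * (prod y K - prod z K) + (y a - z a) * prod z K"
    by (simp add: algebra_simps)
  then have "\<bar>y a * prod y K - z a * prod z K\<bar> \<le> \<bar>y a\<bar> * \<bar>prod y K - prod z K\<bar> + \<bar>y a - z a\<bar> * \<bar>prod z K\<bar>"
    by (metis abs_mult abs_triangle_ineq)
  also have "\<dots> \<le> 1 * \<bar>prod y K - prod z K\<bar> + \<bar>y a - z a\<bar> * 1"
    by (intro add_mono mult_mono ya pz) auto
  also have "\<dots> \<le> (\<Sum>k\<in>K. \<bar>y k - z k\<bar>) + \<bar>y a - z a\<bar>" using IH by simp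
  finally show ?case using insert by (simp add: add.commute)
qed

lemma monomials_le: "b \<in> monomials n e \<Longrightarrow> i < n \<Longrightarrow> Poly_Mapping.lookup b i \<le> e"
  unfolding monomials_def using member_le_sum[of i "{..<n}" "Poly_Mapping.lookup b"] by auto

lemma prod_shift_bound:
  fixes x :: "nat \<Rightarrow> real" and t :: real
  assumes b: "b \<in> monomials n e" and x: "\<And>i. i < n \<Longrightarrow> 0 \<le> x i \<and> x i \<le> 1"
    and t: "0 \<le> t" "e * t \<le> 1"
  shows "\<bar>(\<Prod>i<n. \<Prod>j<Poly_Mapping.lookup b i. (x i - j * t)) - (\<Prod>i<n. x i ^ Poly_Mapping.lookup b i)\<bar> \<le> e * e * t"
proof -
  have jt: "j * t \<le> 1" if "i < n" "j < Poly_Mapping.lookup b i" for i j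
  proof -
    have "real j \<le> e" using monomials_le[OF b that(1)] that(2) by simp
    then have "j * t \<le> e * t" using t(1) by (simp add: mult_right_mono)
    then show ?thesis using t(2) by simp
  qed
  have jt0: "0 \<le> j * t" for j :: nat using t(1) by simp
  have y0: "\<bar>x i - k * t\<bar> \<le> 1" if "i < n" "k < Poly_Mapping.lookup b i" for i k
  proof -
    have "k * t \<le> 1" "0 \<le> k * t" using jt[OF that] jt0[of k] by auto
    then show ?thesis using x[OF that(1)] by (simp add: abs_le_iff)
  qed
  have y1: "\<bar>\<Prod>j<Poly_Mapping.lookup b i. (x i - j * t)\<bar> \<le> 1" if "i < n" for i
    using y0[OF that] by (intro prod_abs_le1) auto
  have z1: "\<bar>x i ^ Poly_Mapping.lookup b i\<bar> \<le> 1" if "i < n" for i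
    using x[OF that] by (simp add: power_le_one abs_le_iff)
  have inner: "\<bar>(\<Prod>j<Poly_Mapping.lookup b i. (x i - j * t)) - x i ^ Poly_Mapping.lookup b i\<bar> \<le> Poly_Mapping.lookup b i * (e * t)"
    if "i < n" for i
  proof -
    have "\<bar>(\<Prod>j<Poly_Mapping.lookup b i. (x i - j * t)) - (\<Prod>j<Poly_Mapping.lookup b i. x i)\<bar>
       \<le> (\<Sum>j<Poly_Mapping.lookup b i. \<bar>(x i - j * t) - x i\<bar>)"
      using x[OF that] y0[OF that] by (intro prod_diff_le) auto
    also have "\<dots> \<le> (\<Sum>j<Poly_Mapping.lookup b i. e * t)"
    proof (intro sum_mono)
      fix j assume "j \<in> {..<Poly_Mapping.lookup b i}"
      then have "real j \<le> e" using monomials_le[OF b that] by simp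
      then show "\<bar>(x i - j * t) - x i\<bar> \<le> e * t" using t(1) by (simp add: mult_right_mono)
    qed
    also have "\<dots> = Poly_Mapping.lookup b i * (e * t)" by simp
    finally show ?thesis by simp
  qed
  have "\<bar>(\<Prod>i<n. \<Prod>j<Poly_Mapping.lookup b i. (x i - j * t)) - (\<Prod>i<n. x i ^ Poly_Mapping.lookup b i)\<bar>
     \<le> (\<Sum>i<n. \<bar>(\<Prod>j<Poly_Mapping.lookup b i. (x i - j * t)) - x i ^ Poly_Mapping.lookup b i\<bar>)"
    using y1 z1 by (intro prod_diff_le) auto
  also have "\<dots> \<le> (\<Sum>i<n. Poly_Mapping.lookup b i * (e * t))"
    by (intro sum_mono inner) auto
  also have "\<dots> = (\<Sum>i<n. Poly_Mapping.lookup b i) * (e * t)"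
    by (simp add: sum_distrib_right)
  also have "\<dots> = e * e * t" using b by (simp add: monomials_def)
  finally show ?thesis by simp
qed




lemma ff_scale:
  fixes A :: real
  assumes "A > 0"
  shows "ff a b = A ^ b * (\<Prod>j<b. (real a / A - real j * (1 / A)))"
proof -
  have "ff a b = (\<Prod>j<b. A * (real a / A - real j * (1 / A)))"
    unfolding ff_def using assms by (intro prod.cong) (auto simp: field_simps)
  also have "\<dots> = A ^ b * (\<Prod>j<b. (real a / A - real j * (1 / A)))"
    by (simp add: prod.distrib)
  finally show ?thesis .
qed

lemma polya:
  assumes n: "0 < n" and g: "is_form n e g"
    and g_pos: "\<And>x. (\<forall>i<n. x i \<ge> 0) \<Longrightarrow> (\<exists>i<n. x i \<noteq> 0) \<Longrightarrow> peval n g x > 0"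
  shows "\<exists>N. \<forall>w\<in>monomials n (N + e). Poly_Mapping.lookup (S n ^ N * g) w > 0"
proof -
  obtain m where m0: "m > 0" and m: "\<And>x. (\<forall>i<n. x i \<ge> 0) \<Longrightarrow> (\<Sum>i<n. x i) = 1 \<Longrightarrow> peval n g x \<ge> m"
    using peval_min[OF n g_pos] by blast
  define G where "G = (\<Sum>b\<in>Poly_Mapping.keys g. \<bar>Poly_Mapping.lookup g b\<bar>)"
  have G0: "G \<ge> 0" unfolding G_def by (rule sum_nonneg) auto
  define N where "N = nat \<lceil>2 * (G * e * e + 1) / m\<rceil>"
  have "real N \<ge> 2 * (G * e * e + 1) / m" unfolding N_def by linarith
  show ?thesis
  proof (intro exI ballI)
    fix w assume w: "w \<in> monomials n (N + e)"
    define A where "A = real (N + e)"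
    have NA: "real N \<le> A" unfolding A_def by simp
    have Gee: "G * e * e \<ge> 0" using G0 by simp
    then have "2 * (G * e * e + 1) / m > 0" using m0 by (intro divide_pos_pos) auto
    then have A0: "A > 0" using \<open>real N \<ge> _\<close> NA by linarith
    have "real N * m \<ge> 2 * (G * e * e + 1)"
      using \<open>real N \<ge> _\<close> m0 by (simp add: field_simps)
    moreover have "real N * m \<le> A * m" using NA m0 by (simp add: mult_right_mono)
    ultimately have AGe: "A * m \<ge> 2 * (G * e * e + 1)" by linarith
    define x where "x = (\<lambda>i. real (Poly_Mapping.lookup w i) / A)"
    define t where "t = 1 / A"
    have t0: "0 \<le> t" using A0 by (simp add: t_def)
    have et: "e * t \<le> 1" using A0 by (simp add: t_def A_def field_simps)
    have sw: "(\<Sum>i<n. Poly_Mapping.lookup w i) = N + e" using w by (simp add: monomials_def)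
    have xsum: "(\<Sum>i<n. x i) = 1"
    proof -
      have "(\<Sum>i<n. real (Poly_Mapping.lookup w i)) = A" unfolding A_def using sw
        by (metis of_nat_sum)
      then show ?thesis unfolding x_def using A0 by (simp add: sum_divide_distrib[symmetric])
    qed
    have xb: "0 \<le> x i \<and> x i \<le> 1" if "i < n" for i
    proof -
      have "Poly_Mapping.lookup w i \<le> (\<Sum>i<n. Poly_Mapping.lookup w i)"
        using that by (intro member_le_sum) auto
      then have "real (Poly_Mapping.lookup w i) \<le> A" using sw by (simp add: A_def)
      then show ?thesis using A0 by (simp add: x_def)
    qed
    have prodeq: "(\<Prod>i<n. ff (Poly_Mapping.lookup w i) (Poly_Mapping.lookup b i))
        = A ^ e * (\<Prod>i<n. \<Prod>j<Poly_Mapping.lookup b i. (x i - j * t))"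
      if b: "b \<in> monomials n e" for b
    proof -
      have "(\<Prod>i<n. ff (Poly_Mapping.lookup w i) (Poly_Mapping.lookup b i))
         = (\<Prod>i<n. A ^ Poly_Mapping.lookup b i * (\<Prod>j<Poly_Mapping.lookup b i. (x i - j * t)))"
        unfolding x_def t_def by (intro prod.cong refl ff_scale A0)
      also have "\<dots> = A ^ (\<Sum>i<n. Poly_Mapping.lookup b i) * (\<Prod>i<n. \<Prod>j<Poly_Mapping.lookup b i. (x i - j * t))"
        by (simp add: prod.distrib power_sum)
      also have "(\<Sum>i<n. Poly_Mapping.lookup b i) = e" using b by (simp add: monomials_def)
      finally show ?thesis .
    qed
    define Q where "Q = (\<Sum>b\<in>Poly_Mapping.keys g. Poly_Mapping.lookup g b * (\<Prod>i<n. \<Prod>j<Poly_Mapping.lookup b i. (x i - j * t)))"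
    have Qeq: "(\<Sum>b\<in>Poly_Mapping.keys g. Poly_Mapping.lookup g b * (\<Prod>i<n. ff (Poly_Mapping.lookup w i) (Poly_Mapping.lookup b i)))
       = A ^ e * Q"
      unfolding Q_def sum_distrib_left
      by (intro sum.cong refl) (use g prodeq in \<open>auto simp: is_form_def\<close>)
    have pe: "peval n g x = (\<Sum>b\<in>Poly_Mapping.keys g. Poly_Mapping.lookup g b * (\<Prod>i<n. x i ^ Poly_Mapping.lookup b i))"
      by (simp add: peval_def)
    have "peval n g x - Q = (\<Sum>b\<in>Poly_Mapping.keys g. Poly_Mapping.lookup g b *
        ((\<Prod>i<n. x i ^ Poly_Mapping.lookup b i) - (\<Prod>i<n. \<Prod>j<Poly_Mapping.lookup b i. (x i - j * t))))"
      unfolding pe Q_def by (simp add: sum_subtractf[symmetric] right_diff_distrib)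
    also have "\<dots> \<le> (\<Sum>b\<in>Poly_Mapping.keys g. \<bar>Poly_Mapping.lookup g b\<bar> * (e * e * t))"
    proof (rule sum_mono)
      fix b assume "b \<in> Poly_Mapping.keys g"
      then have b: "b \<in> monomials n e" using g by (auto simp: is_form_def)
      have "\<bar>(\<Prod>i<n. x i ^ Poly_Mapping.lookup b i) - (\<Prod>i<n. \<Prod>j<Poly_Mapping.lookup b i. (x i - j * t))\<bar> \<le> e * e * t"
        using prod_shift_bound[OF b xb t0 et] by (simp add: abs_minus_commute)
      then have "\<bar>Poly_Mapping.lookup g b * ((\<Prod>i<n. x i ^ Poly_Mapping.lookup b i) - (\<Prod>i<n. \<Prod>j<Poly_Mapping.lookup b i. (x i - j * t)))\<bar>
          \<le> \<bar>Poly_Mapping.lookup g b\<bar> * (e * e * t)"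
        by (simp add: abs_mult mult_left_mono)
      then show "Poly_Mapping.lookup g b * ((\<Prod>i<n. x i ^ Poly_Mapping.lookup b i) - (\<Prod>i<n. \<Prod>j<Poly_Mapping.lookup b i. (x i - j * t)))
          \<le> \<bar>Poly_Mapping.lookup g b\<bar> * (e * e * t)" by linarith
    qed
    also have "\<dots> = G * e * e * t" unfolding G_def by (simp add: sum_distrib_right mult.assoc)
    finally have "Q \<ge> peval n g x - G * e * e * t" by simp
    moreover have "peval n g x \<ge> m" using m[of x] xb xsum by auto
    moreover have "G * e * e * t < m"
    proof -
      have "G * e * e * t = G * e * e / A" by (simp add: t_def)
      also have "\<dots> < m"
      proof -
        have "G * e * e < A * m" using AGe Gee by (smt (verit))
        then show ?thesis using A0 by (simp add: field_simps)
      qed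
      finally show ?thesis .
    qed
    ultimately have Q0: "Q > 0" by linarith
    have "Poly_Mapping.lookup (S n ^ N * g) w = fact N / (\<Prod>i<n. fact (Poly_Mapping.lookup w i)) * (A ^ e * Q)"
      using lookup_Spow_mult[OF g w] Qeq by simp
    also have "\<dots> > 0" using Q0 A0 prod_fact_pos[where n=n and w=w]
      by (intro mult_pos_pos divide_pos_pos) auto
    finally show "Poly_Mapping.lookup (S n ^ N * g) w > 0" .
  qed
qed




lemma lookup_Spow_nonneg: "Poly_Mapping.lookup (S n ^ a) w \<ge> 0"
  using pge0_power[OF pge0_S] unfolding pge0_def by blast

lemma lower_S:
  assumes q: "is_form n a q" and qpos: "\<And>w. w \<in> monomials n a \<Longrightarrow> Poly_Mapping.lookup q w > 0"
  shows "\<exists>c>0. \<forall>w. c * Poly_Mapping.lookup (S n ^ a) w \<le> Poly_Mapping.lookup q w"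
proof -
  define K where "K = Poly_Mapping.keys (S n ^ a)"
  define c where "c = Min (insert 1 ((\<lambda>w. Poly_Mapping.lookup q w / Poly_Mapping.lookup (S n ^ a) w) ` K))"
  have Km: "w \<in> monomials n a" if "w \<in> K" for w
    using that is_form_Spow[of n a] unfolding K_def is_form_def by blast
  have fin: "finite (insert 1 ((\<lambda>w. Poly_Mapping.lookup q w / Poly_Mapping.lookup (S n ^ a) w) ` K))"
    unfolding K_def by simp
  have "c > 0" unfolding c_def
    using fin by (subst Min_gr_iff) (auto intro!: divide_pos_pos qpos Km lookup_S_power_pos)
  moreover have "c * Poly_Mapping.lookup (S n ^ a) w \<le> Poly_Mapping.lookup q w" for w
  proof (cases "w \<in> K")
    case True
    have "c \<le> Poly_Mapping.lookup q w / Poly_Mapping.lookup (S n ^ a) w"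
      unfolding c_def using fin True by (intro Min_le) auto
    then show ?thesis using lookup_S_power_pos[OF Km[OF True]] by (simp add: field_simps)
  next
    case False
    then have "Poly_Mapping.lookup (S n ^ a) w = 0" unfolding K_def by (simp add: in_keys_iff)
    moreover have "Poly_Mapping.lookup q w \<ge> 0"
      using qpos[of w] is_form_lookup[OF q, of w] by (cases "w \<in> monomials n a") auto
    ultimately show ?thesis by simp
  qed
  ultimately show ?thesis by blast
qed

lemma upper_S:
  assumes p: "is_form n a p"
  shows "\<exists>M\<ge>0. \<forall>w. \<bar>Poly_Mapping.lookup p w\<bar> \<le> M * Poly_Mapping.lookup (S n ^ a) w"
proof -
  define M where "M = (\<Sum>w\<in>Poly_Mapping.keys p. \<bar>Poly_Mapping.lookup p w\<bar> / Poly_Mapping.lookup (S n ^ a) w)"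
  have Sp: "Poly_Mapping.lookup (S n ^ a) w > 0" if "w \<in> Poly_Mapping.keys p" for w
    using that p lookup_S_power_pos unfolding is_form_def by blast
  have M0: "M \<ge> 0" unfolding M_def using Sp by (intro sum_nonneg) (simp add: less_imp_le)
  moreover have "\<bar>Poly_Mapping.lookup p w\<bar> \<le> M * Poly_Mapping.lookup (S n ^ a) w" for w
  proof (cases "w \<in> Poly_Mapping.keys p")
    case True
    have "\<bar>Poly_Mapping.lookup p w\<bar> / Poly_Mapping.lookup (S n ^ a) w \<le> M"
      unfolding M_def using True Sp by (intro member_le_sum) (auto simp: less_imp_le)
    then show ?thesis using Sp[OF True] by (simp add: field_simps)
  next
    case False
    then show ?thesis using M0 lookup_Spow_nonneg[of n a w] by (simp add: in_keys_iff)
  qed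
  ultimately show ?thesis by blast
qed

lemma binom_step:
  fixes l i R :: nat
  assumes "i + 1 \<le> 2 * N" "2 * N * R + 2 * N \<le> l"
  shows "real (l choose (i + 1)) \<ge> real R * real (l choose i)"
proof -
  have eq: "(l choose (i + 1)) * (i + 1) = (l choose i) * (l - i)"
  proof (cases l)
    case 0 then show ?thesis by simp
  next
    case (Suc l')
    have "(Suc l' choose Suc i) * Suc i = Suc l' * (l' choose i)"
      using Suc_times_binomial[of i l'] by (simp add: mult.commute)
    also have "\<dots> = (Suc l' choose i) * (Suc l' - i)"
      using binomial_absorb_comp[of "Suc l'" i] by (simp only: diff_Suc_1 mult.commute)
    finally show ?thesis using Suc by simp
  qed
  have "R * (i + 1) \<le> l - i"
  proof -
    have "R * (i + 1) \<le> R * (2 * N)" using assms(1) by (intro mult_le_mono2)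
    also have "\<dots> \<le> l - i" using assms by (simp add: algebra_simps)
    finally show ?thesis .
  qed
  then have "(l choose i) * (R * (i + 1)) \<le> (l choose i) * (l - i)" by simp
  also have "\<dots> = (l choose (i + 1)) * (i + 1)" using eq by simp
  finally have "(l choose i) * (R * (i + 1)) \<le> (l choose (i + 1)) * (i + 1)" .
  then have "(R * (l choose i)) * (i + 1) \<le> (l choose (i + 1)) * (i + 1)"
    by (metis mult.assoc mult.commute)
  then have "R * (l choose i) \<le> (l choose (i + 1))" by (subst (asm) mult_le_cancel2) simp
  then show ?thesis by (metis of_nat_le_iff of_nat_mult)
qed

lemma binom_growth:
  fixes l k j R :: nat
  assumes "k + j \<le> 2 * N" "2 * N * R + 2 * N \<le> l"
  shows "real (l choose (k + j)) \<ge> real R ^ j * real (l choose k)"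
  using assms(1)
proof (induction j)
  case 0 then show ?case by simp
next
  case (Suc j)
  have IH: "real (l choose (k + j)) \<ge> real R ^ j * real (l choose k)" using Suc by simp
  have "real (l choose (k + j + 1)) \<ge> real R * real (l choose (k + j))"
    using Suc.prems assms(2) by (intro binom_step[of _ N]) auto
  moreover have "real R * real (l choose (k + j)) \<ge> real R * (real R ^ j * real (l choose k))"
    using IH by (intro mult_left_mono) auto
  ultimately show ?case by simp
qed




lemma lookup_cst_mult_left: "Poly_Mapping.lookup (r * (cst a * p)) w = a * Poly_Mapping.lookup (r * p) w"
  by (metis lookup_cst_mult mult.left_commute)

theorem lemma3p2:
  fixes n d e :: nat and f g :: rpoly
  assumes f_form: "is_form n d f"
    and f_pos: "strictly_pos_coeffs n d f"
    and f_noncst: "nonconstant f"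
    and g_form: "is_form n e g"
    and g_pos: "\<And>x. (\<forall>i<n. x i \<ge> 0) \<Longrightarrow> (\<exists>i<n. x i \<noteq> 0) \<Longrightarrow> peval n g x > 0"
  shows "\<exists>l::nat. l \<ge> 1 \<and> (\<forall>w. Poly_Mapping.lookup (f ^ l * g) w \<ge> 0)"
proof -
  obtain w0 where w0: "w0 \<in> Poly_Mapping.keys f" "w0 \<noteq> 0"
    using f_noncst unfolding nonconstant_def by blast
  have w0m: "w0 \<in> monomials n d" using w0(1) f_form unfolding is_form_def by blast
  obtain i0 where i0: "Poly_Mapping.lookup w0 i0 \<noteq> 0"
    using w0(2) by (metis poly_mapping_eqI lookup_zero)
  then have "i0 \<in> Poly_Mapping.keys w0" by (simp add: in_keys_iff)
  then have i0n: "i0 < n" using w0m by (auto simp: monomials_def)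
  then have n0: "0 < n" by simp
  have "Poly_Mapping.lookup w0 i0 \<le> d" using monomials_le[OF w0m i0n] .
  then have d1: "d \<ge> 1" using i0 by simp
  obtain c where c0: "c > 0" and cf: "\<And>w. c * Poly_Mapping.lookup (S n ^ d) w \<le> Poly_Mapping.lookup f w"
    using lower_S[OF f_form] f_pos unfolding strictly_pos_coeffs_def by blast
  obtain C where C0: "C \<ge> 0" and Cf: "\<And>w. \<bar>Poly_Mapping.lookup f w\<bar> \<le> C * Poly_Mapping.lookup (S n ^ d) w"
    using upper_S[OF f_form] by blast
  obtain M where M0: "M \<ge> 0" and Mg: "\<And>w. \<bar>Poly_Mapping.lookup g w\<bar> \<le> M * Poly_Mapping.lookup (S n ^ e) w"
    using upper_S[OF g_form] by blast
  obtain N0 where N0: "\<And>w. w \<in> monomials n (N0 + e) \<Longrightarrow> Poly_Mapping.lookup (S n ^ N0 * g) w > 0"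
    using polya[OF n0 g_form g_pos] by blast
  have N0form: "is_form n (N0 + e) (S n ^ N0 * g)"
    using is_form_mult[OF is_form_Spow g_form] by simp
  obtain \<delta> where \<delta>0: "\<delta> > 0" and \<delta>g: "\<And>w. \<delta> * Poly_Mapping.lookup (S n ^ (N0 + e)) w \<le> Poly_Mapping.lookup (S n ^ N0 * g) w"
    using lower_S[OF N0form N0] by blast
  define h where "h = f - cst c * S n ^ d"
  have h0: "pge0 h" unfolding pge0_def h_def using cf by (simp add: lookup_minus)
  have hC: "ple h (cst C * S n ^ d)"
    unfolding ple_def h_def
  proof
    fix w
    have "Poly_Mapping.lookup f w \<le> C * Poly_Mapping.lookup (S n ^ d) w" using Cf[of w] by linarith
    moreover have "0 \<le> c * Poly_Mapping.lookup (S n ^ d) w" using c0 lookup_Spow_nonneg[of n d w] by simp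
    ultimately show "Poly_Mapping.lookup (f - cst c * S n ^ d) w \<le> Poly_Mapping.lookup (cst C * S n ^ d) w"
      by (simp add: lookup_minus)
  qed
  have fh: "f = cst c * S n ^ d + h" unfolding h_def by simp
  have gM: "ple (cst (- M) * S n ^ e) g"
    unfolding ple_def using Mg by (simp add: abs_le_iff) (metis abs_le_iff minus_le_iff)
  have lowK: "ple (cst (- M) * S n ^ (K + e)) (S n ^ K * g)" for K
  proof -
    have "ple (S n ^ K * (cst (- M) * S n ^ e)) (S n ^ K * g)"
      by (rule ple_mult_left[OF pge0_power[OF pge0_S] gM])
    moreover have "S n ^ K * (cst (- M) * S n ^ e) = cst (- M) * S n ^ (K + e)"
      by (simp add: power_add ac_simps)
    ultimately show ?thesis by simp
  qed
  have goodK: "ple (cst \<delta> * S n ^ (K + e)) (S n ^ K * g)" if "K \<ge> N0" for K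
  proof -
    have "ple (cst \<delta> * S n ^ (N0 + e)) (S n ^ N0 * g)" unfolding ple_def using \<delta>g by simp
    then have "ple (S n ^ (K - N0) * (cst \<delta> * S n ^ (N0 + e))) (S n ^ (K - N0) * (S n ^ N0 * g))"
      by (rule ple_mult_left[OF pge0_power[OF pge0_S]])
    moreover have "S n ^ (K - N0) * (cst \<delta> * S n ^ (N0 + e)) = cst \<delta> * S n ^ (K + e)"
      using that by (simp add: power_add[symmetric] ac_simps)
    moreover have "S n ^ (K - N0) * (S n ^ N0 * g) = S n ^ K * g"
      using that by (simp add: mult.assoc[symmetric] power_add[symmetric])
    ultimately show ?thesis by simp
  qed
  define N where "N = N0 + 1"
  define A where "A = M * C ^ N / (\<delta> * c ^ N)"
  define R where "R = nat \<lceil>A\<rceil> + 1"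
  define l where "l = 2 * N * R + 2 * N"
  have N1: "N \<ge> 1" unfolding N_def by simp
  have A0: "A \<ge> 0" unfolding A_def using M0 C0 \<delta>0 c0 by simp
  have RA: "real R \<ge> A" "real R \<ge> 1" unfolding R_def by linarith+
  have l1: "l \<ge> 1" unfolding l_def using N1 by simp
  have binA: "real (l choose (k + N)) \<ge> A * real (l choose k)" if "k < N" for k
  proof -
    have "real (l choose (k + N)) \<ge> real R ^ N * real (l choose k)"
      using that by (intro binom_growth[of _ _ N]) (auto simp: l_def)
    moreover have "real R ^ N \<ge> real R"
      using RA(2) N1 by (metis power_increasing power_one_right)
    ultimately show ?thesis using RA(1)
      by (meson mult_right_mono of_nat_0_le_iff order_trans)
  qed
  define b where "b k = real (l choose k) * c ^ k" for k
  have b0: "b k \<ge> 0" for k unfolding b_def using c0 by simp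
  have expand: "f ^ l * g = (\<Sum>k\<le>l. cst (b k) * (h ^ (l - k) * (S n ^ (d * k) * g)))"
  proof -
    have "f ^ l * g = (\<Sum>k\<le>l. of_nat (l choose k) * (cst c * S n ^ d) ^ k * h ^ (l - k)) * g"
      unfolding fh by (simp add: binomial_ring)
    also have "\<dots> = (\<Sum>k\<le>l. cst (b k) * (h ^ (l - k) * (S n ^ (d * k) * g)))"
      unfolding sum_distrib_right
    proof (rule sum.cong[OF refl])
      fix k
      have "(cst c * S n ^ d) ^ k = cst (c ^ k) * S n ^ (d * k)"
        by (simp add: power_mult_distrib cst_power power_mult)
      then show "of_nat (l choose k) * (cst c * S n ^ d) ^ k * h ^ (l - k) * g
          = cst (b k) * (h ^ (l - k) * (S n ^ (d * k) * g))"
        by (simp add: b_def cst_of_nat cst_mult[symmetric] ac_simps)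
    qed
    finally show ?thesis .
  qed
  show ?thesis
  proof (intro exI conjI allI)
    show "l \<ge> 1" by (rule l1)
    fix w
    define V where "V k = Poly_Mapping.lookup (h ^ (l - k) * (S n ^ (d * k) * g)) w" for k
    define W where "W k = Poly_Mapping.lookup (h ^ (l - k) * S n ^ (d * k + e)) w" for k
    have W0: "W k \<ge> 0" for k
      using pge0_mult[OF pge0_power[OF h0] pge0_power[OF pge0_S]] unfolding W_def pge0_def by blast
    have Va: "V k \<ge> - M * W k" for k
    proof -
      have "ple (h ^ (l - k) * (cst (- M) * S n ^ (d * k + e))) (h ^ (l - k) * (S n ^ (d * k) * g))"
        by (rule ple_mult_left[OF pge0_power[OF h0] lowK])
      then show ?thesis unfolding ple_def V_def W_def lookup_cst_mult_left by simp
    qed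
    have Vb: "V k \<ge> \<delta> * W k" if "k \<ge> N" for k
    proof -
      have "d * k \<ge> N0" using that d1 unfolding N_def
        by (metis Suc_eq_plus1 Suc_leD le_trans mult_le_mono1 mult_1)
      then have "ple (h ^ (l - k) * (cst \<delta> * S n ^ (d * k + e))) (h ^ (l - k) * (S n ^ (d * k) * g))"
        by (intro ple_mult_left[OF pge0_power[OF h0]] goodK)
      then show ?thesis unfolding ple_def V_def W_def lookup_cst_mult_left by simp
    qed
    have Wc: "W k \<le> C ^ N * W (k + N)" if "k + N \<le> l" for k
    proof -
      define r where "r = h ^ (l - (k + N)) * S n ^ (d * k + e)"
      have r0: "pge0 r" unfolding r_def by (intro pge0_mult pge0_power h0 pge0_S)
      have "ple (h ^ N) ((cst C * S n ^ d) ^ N)" by (rule ple_power[OF h0 hC])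
      then have "ple (r * h ^ N) (r * (cst C * S n ^ d) ^ N)" by (rule ple_mult_left[OF r0])
      moreover have "r * h ^ N = h ^ (l - k) * S n ^ (d * k + e)"
      proof -
        have "l - k = (l - (k + N)) + N" using that by simp
        then show ?thesis unfolding r_def by (simp add: power_add ac_simps)
      qed
      moreover have "r * (cst C * S n ^ d) ^ N = cst (C ^ N) * (h ^ (l - (k + N)) * S n ^ (d * (k + N) + e))"
        unfolding r_def by (simp add: power_mult_distrib cst_power power_mult[symmetric] power_add algebra_simps)
      ultimately show ?thesis unfolding ple_def W_def by simp
    qed
    have lk: "Poly_Mapping.lookup (f ^ l * g) w = (\<Sum>k\<le>l. b k * V k)"
      unfolding expand lookup_sum V_def by simp
    have pair: "b k * V k + b (k + N) * V (k + N) \<ge> 0" if "k < N" for k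
    proof -
      have kl: "k + N \<le> l" using that unfolding l_def by simp
      have "b k * V k \<ge> b k * (- M * W k)" using mult_left_mono[OF Va[of k] b0[of k]] by simp
      moreover have "b k * (- M * W k) \<ge> b k * (- M * (C ^ N * W (k + N)))"
        using Wc[OF kl] b0[of k] M0 by (simp add: mult_left_mono)
      moreover have "b (k + N) * V (k + N) \<ge> b (k + N) * (\<delta> * W (k + N))"
        using Vb[of "k + N"] b0 by (simp add: mult_left_mono)
      moreover have "b (k + N) * \<delta> \<ge> b k * M * C ^ N"
      proof -
        have E1: "b (k + N) * \<delta> = real (l choose (k + N)) * (c ^ k * (c ^ N * \<delta>))"
          unfolding b_def power_add by (simp only: mult.assoc)
        have p: "c ^ k * (c ^ N * \<delta>) \<ge> 0" using c0 \<delta>0 by simp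
        have E2: "A * real (l choose k) * (c ^ k * (c ^ N * \<delta>)) \<le> real (l choose (k + N)) * (c ^ k * (c ^ N * \<delta>))"
          by (rule mult_right_mono[OF binA[OF that] p])
        have E3: "A * (c ^ N * \<delta>) = M * C ^ N" unfolding A_def using c0 \<delta>0 by simp
        have E4: "A * real (l choose k) * (c ^ k * (c ^ N * \<delta>)) = b k * (A * (c ^ N * \<delta>))"
          unfolding b_def by (simp only: ac_simps)
        have "b k * M * C ^ N = A * real (l choose k) * (c ^ k * (c ^ N * \<delta>))"
          unfolding E4 E3 by (simp only: ac_simps)
        then show ?thesis using E1 E2 by linarith
      qed
      then have "(b (k + N) * \<delta> - b k * M * C ^ N) * W (k + N) \<ge> 0"
        using W0 by simp
      ultimately show ?thesis by (simp add: algebra_simps)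
    qed
    have rest: "b k * V k \<ge> 0" if "k \<ge> N" for k
    proof -
      have "b k * V k \<ge> b k * (\<delta> * W k)" using mult_left_mono[OF Vb[OF that] b0[of k]] .
      moreover have "b k * (\<delta> * W k) \<ge> 0" using b0[of k] \<delta>0 W0[of k] by simp
      ultimately show ?thesis by linarith
    qed
    define F where "F k = b k * V k" for k
    have s1: "{..l} = {0..<l + 1}" by auto
    have NNl: "N + N \<le> l + 1" unfolding l_def by simp
    have s2: "sum F {0..<l + 1} = sum F {0..<N} + sum F {N..<l + 1}"
      by (rule sum.atLeastLessThan_concat[symmetric]) (use NNl in auto)
    have s3: "sum F {N..<l + 1} = sum F {N..<N + N} + sum F {N + N..<l + 1}"
      by (rule sum.atLeastLessThan_concat[symmetric]) (use NNl in auto)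
    have s4: "sum F {N..<N + N} = (\<Sum>k\<in>{0..<N}. F (k + N))"
      using sum.shift_bounds_nat_ivl[of F 0 N N] by simp
    have "sum F {..l} = (\<Sum>k\<in>{0..<N}. F k + F (k + N)) + sum F {N + N..<l + 1}"
      unfolding s1 s2 s3 s4 sum.distrib by simp
    also have "\<dots> \<ge> 0"
    proof -
      have "(\<Sum>k\<in>{0..<N}. F k + F (k + N)) \<ge> 0"
        by (rule sum_nonneg) (use pair in \<open>auto simp: F_def\<close>)
      moreover have "sum F {N + N..<l + 1} \<ge> 0"
        by (rule sum_nonneg) (use rest in \<open>auto simp: F_def\<close>)
      ultimately show ?thesis by linarith
    qed
    finally have "sum F {..l} \<ge> 0" .
    then show "Poly_Mapping.lookup (f ^ l * g) w \<ge> 0" using lk unfolding F_def by simp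
  qed
qed


end
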